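(* Let $n\ge1$ and $m\ge2$. The maps $s_0,\dots,s_m$ on the vertex set of $Y_{n,m}$ satisfy the Coxeter relations of $\tilde C_m$: $s_i^2=\mathrm{Id}$ for all $0\le i\le m$; $(s_is_j)^2=\mathrm{Id}$ whenever $|i-j|>1$; $(s_is_{i+1})^3=\mathrm{Id}$ for all $1\le i\le m-2$; and $(s_0s_1)^4=(s_{m-1}s_m)^4=\mathrm{Id}$.
   Context: The Yoke graph $Y_{n,m}$ has vertices the tuples $v=(v_0,\dots,v_{m+1})$ with $v_0,v_{m+1}\in\mathbb{Z}_n$, $v_1,\dots,v_m\in\{0,1\}$, $\sum v_i\equiv0\pmod n$ (bucket entries $v_0,v_{m+1}$ computed mod $n$). For $0\le i\le m$ let $\overleftarrow{s}_i(v)$ be obtained from $v$ by replacing $v_i,v_{i+1}$ with $v_i+1,v_{i+1}-1$, and $\overrightarrow{s}_i(v)$ by replacing them with $v_i-1,v_{i+1}+1$ (whenever the result is a vertex). Define $s_0(v)=\overleftarrow{s}_0(v)$ if $v_1=1$ and $s_0(v)=\overrightarrow{s}_0(v)$ if $v_1=0$; $s_m(v)=\overleftarrow{s}_m(v)$ if $v_m=0$ and $s_m(v)=\overrightarrow{s}_m(v)$ if $v_m=1$; and for $1\le i\le m-1$, $s_i(v)$ is $v$ with entries $v_i$ and $v_{i+1}$ swapped. *)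

theory Defs
  imports Main
begin

text \<open>A vertex of the Yoke graph Y_{n,m} is represented as a function v :: nat => int,
  where v 0 and v (m+1) are the bucket entries, stored as canonical representatives
  in {0..<n} of Z_n, the entries v 1, ..., v m lie in {0,1}, all entries beyond
  index m+1 are 0, and the total sum is divisible by n.\<close>

definition yoke_vertices :: "nat \<Rightarrow> nat \<Rightarrow> (nat \<Rightarrow> int) set" where
  "yoke_vertices n m = {v.
      0 \<le> v 0 \<and> v 0 < int n \<and> 0 \<le> v (m+1) \<and> v (m+1) < int n
    \<and> (\<forall>i\<in>{1..m}. v i \<in> {0,1})
    \<and> (\<forall>i>m+1. v i = 0)
    \<and> (\<Sum>i\<le>m+1. v i) mod int n = 0}"

definition bucket_norm :: "nat \<Rightarrow> nat \<Rightarrow> (nat \<Rightarrow> int) \<Rightarrow> (nat \<Rightarrow> int)" where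
  "bucket_norm n m v = v(0 := v 0 mod int n, m+1 := v (m+1) mod int n)"

definition s_left :: "nat \<Rightarrow> nat \<Rightarrow> nat \<Rightarrow> (nat \<Rightarrow> int) \<Rightarrow> (nat \<Rightarrow> int)" where
  "s_left n m i v = bucket_norm n m (v(i := v i + 1, Suc i := v (Suc i) - 1))"

definition s_right :: "nat \<Rightarrow> nat \<Rightarrow> nat \<Rightarrow> (nat \<Rightarrow> int) \<Rightarrow> (nat \<Rightarrow> int)" where
  "s_right n m i v = bucket_norm n m (v(i := v i - 1, Suc i := v (Suc i) + 1))"

definition yoke_s :: "nat \<Rightarrow> nat \<Rightarrow> nat \<Rightarrow> (nat \<Rightarrow> int) \<Rightarrow> (nat \<Rightarrow> int)" where
  "yoke_s n m i v =
     (if i = 0 then (if v 1 = 1 then s_left n m 0 v else s_right n m 0 v)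
      else if i = m then (if v m = 0 then s_left n m m v else s_right n m m v)
      else v(i := v (Suc i), Suc i := v i))"

end

theory Submission
  imports Defs
begin

lemma s0_1: "m \<ge> 2 \<Longrightarrow> v 1 = 1 \<Longrightarrow> 0 \<le> v (Suc m) \<Longrightarrow> v (Suc m) < int n \<Longrightarrow>
  yoke_s n m 0 v = v(0 := (v 0 + 1) mod int n, 1 := 0)"
  by (auto simp: yoke_s_def s_left_def bucket_norm_def fun_eq_iff)

lemma s0_0: "m \<ge> 2 \<Longrightarrow> v 1 = 0 \<Longrightarrow> 0 \<le> v (Suc m) \<Longrightarrow> v (Suc m) < int n \<Longrightarrow>
  yoke_s n m 0 v = v(0 := (v 0 - 1) mod int n, 1 := 1)"
  by (auto simp: yoke_s_def s_right_def bucket_norm_def fun_eq_iff)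

lemma sm_0: "m \<ge> 2 \<Longrightarrow> v m = 0 \<Longrightarrow> 0 \<le> v 0 \<Longrightarrow> v 0 < int n \<Longrightarrow>
  yoke_s n m m v = v(m := 1, Suc m := (v (Suc m) - 1) mod int n)"
  by (auto simp: yoke_s_def s_left_def bucket_norm_def fun_eq_iff)

lemma sm_1: "m \<ge> 2 \<Longrightarrow> v m = 1 \<Longrightarrow> 0 \<le> v 0 \<Longrightarrow> v 0 < int n \<Longrightarrow>
  yoke_s n m m v = v(m := 0, Suc m := (v (Suc m) + 1) mod int n)"
  by (auto simp: yoke_s_def s_right_def bucket_norm_def fun_eq_iff)

lemma smid: "1 \<le> i \<Longrightarrow> i < m \<Longrightarrow> yoke_s n m i v = v(i := v (Suc i), Suc i := v i)"
  by (auto simp: yoke_s_def)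


lemma p2: "(f ^^ 2) x = f (f x)" by (simp add: numeral_2_eq_2)
lemma p3: "(f ^^ 3) x = f (f (f x))" by (simp add: numeral_3_eq_3)
lemma p4: "(f ^^ 4) x = f (f (f (f x)))" by (simp add: eval_nat_numeral)
lemmas ev = p2 p3 p4 o_apply

lemma r00:
  assumes "m \<ge> 2" "0 \<le> v 0" "v 0 < int n" "0 \<le> v (Suc m)" "v (Suc m) < int n" "v 1 \<in> {0,1}"
  shows "(yoke_s n m 0 ^^ 2) v = v"
proof -
  have a: "v 0 mod int n = v 0" using assms by simp
  have mm: "m \<noteq> 0" "m \<noteq> 1" "1 \<noteq> m" "m \<noteq> Suc 0" "0 \<noteq> m" "Suc 0 \<noteq> m" "Suc m \<noteq> 2" "2 \<noteq> Suc m" using assms(1) by auto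
  show ?thesis using assms(6)
    by (auto simp: ev s0_1 s0_0 assms fun_eq_iff mod_simps a mm)
qed

lemma rmm:
  assumes "m \<ge> 2" "0 \<le> v 0" "v 0 < int n" "0 \<le> v (Suc m)" "v (Suc m) < int n" "v m \<in> {0,1}"
  shows "(yoke_s n m m ^^ 2) v = v"
proof -
  have a: "v (Suc m) mod int n = v (Suc m)" using assms by simp
  have mm: "m \<noteq> 0" "m \<noteq> 1" "1 \<noteq> m" "m \<noteq> Suc 0" "0 \<noteq> m" "Suc 0 \<noteq> m" "Suc m \<noteq> 2" "2 \<noteq> Suc m" using assms(1) by auto
  show ?thesis using assms(6)
    by (auto simp: ev sm_1 sm_0 assms fun_eq_iff mod_simps a mm)
qed

lemma r01:
  assumes "m \<ge> 2" "0 \<le> v 0" "v 0 < int n" "0 \<le> v (Suc m)" "v (Suc m) < int n" "v 1 \<in> {0,1}" "v 2 \<in> {0,1}"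
  shows "((yoke_s n m 0 \<circ> yoke_s n m 1) ^^ 4) v = v"
proof -
  have a: "v 0 mod int n = v 0" using assms by simp
  have mm: "m \<noteq> 0" "m \<noteq> 1" "1 \<noteq> m" "m \<noteq> Suc 0" "0 \<noteq> m" "Suc 0 \<noteq> m" "Suc m \<noteq> 2" "2 \<noteq> Suc m" using assms(1) by auto
  have m1: "yoke_s n m (Suc 0) = (\<lambda>v. v(Suc 0 := v 2, 2 := v (Suc 0)))"
    using assms(1) by (auto simp: smid fun_eq_iff numeral_2_eq_2)
  show ?thesis using assms(6,7)
    by (auto simp: ev s0_1 s0_0 m1 assms fun_eq_iff mod_simps a mm)
qed


lemma rmm1:
  assumes "m \<ge> 2" "0 \<le> v 0" "v 0 < int n" "0 \<le> v (Suc m)" "v (Suc m) < int n" "v m \<in> {0,1}" "v k \<in> {0,1}" "m = Suc k"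
  shows "((yoke_s n m k \<circ> yoke_s n m m) ^^ 4) v = v"
proof -
  have a: "v (Suc m) mod int n = v (Suc m)" using assms by simp
  have mm: "m \<noteq> 0" "0 \<noteq> m" "k \<noteq> 0" "0 \<noteq> k" "k \<noteq> m" "m \<noteq> k" "k \<noteq> Suc m" "Suc m \<noteq> k" using assms(1,8) by auto
  have m1: "yoke_s n m k = (\<lambda>v. v(k := v m, m := v k))"
    using assms(1,8) by (auto simp: smid fun_eq_iff)
  show ?thesis using assms(6,7)
    by (auto simp: ev sm_1 sm_0 m1 assms(1-5) fun_eq_iff mod_simps a mm)
qed

lemma r3:
  assumes "1 \<le> i" "i + 2 \<le> m"
  shows "((yoke_s n m i \<circ> yoke_s n m (i+1)) ^^ 3) v = v"
proof -
  have m1: "yoke_s n m i = (\<lambda>v. v(i := v (Suc i), Suc i := v i))"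
    using assms by (auto simp: smid fun_eq_iff)
  have m2: "yoke_s n m (Suc i) = (\<lambda>v. v(Suc i := v (Suc (Suc i)), Suc (Suc i) := v (Suc i)))"
    using assms by (auto simp: smid fun_eq_iff)
  show ?thesis by (auto simp: ev m1 m2 fun_eq_iff)
qed

lemma cmid:
  assumes "1 \<le> i" "i < m" "1 \<le> j" "j < m" "i > j + 1 \<or> j > i + 1"
  shows "((yoke_s n m i \<circ> yoke_s n m j) ^^ 2) v = v"
proof -
  have m1: "yoke_s n m i = (\<lambda>v. v(i := v (Suc i), Suc i := v i))"
    using assms by (auto simp: smid fun_eq_iff)
  have m2: "yoke_s n m j = (\<lambda>v. v(j := v (Suc j), Suc j := v j))"
    using assms by (auto simp: smid fun_eq_iff)
  show ?thesis using assms(5) by (auto simp: ev m1 m2 fun_eq_iff)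
qed

lemma c0mid:
  assumes "m \<ge> 2" "0 \<le> v 0" "v 0 < int n" "0 \<le> v (Suc m)" "v (Suc m) < int n" "v 1 \<in> {0,1}"
    "2 \<le> j" "j < m"
  shows "((yoke_s n m 0 \<circ> yoke_s n m j) ^^ 2) v = v \<and> ((yoke_s n m j \<circ> yoke_s n m 0) ^^ 2) v = v"
proof -
  have a: "v 0 mod int n = v 0" using assms by simp
  have mm: "m \<noteq> 0" "m \<noteq> 1" "1 \<noteq> m" "m \<noteq> Suc 0" "0 \<noteq> m" "Suc 0 \<noteq> m" "j \<noteq> 0" "j \<noteq> Suc 0" "Suc j \<noteq> Suc m" "Suc m \<noteq> Suc j"
     "Suc 0 \<noteq> j" "0 \<noteq> j" "m \<noteq> j" "j \<noteq> m" "j \<noteq> Suc m" "Suc m \<noteq> j"  using assms by auto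
  have m2: "yoke_s n m j = (\<lambda>v. v(j := v (Suc j), Suc j := v j))"
    using assms by (auto simp: smid fun_eq_iff)
  show ?thesis using assms(6)
    by (auto simp: ev s0_1 s0_0 m2 assms(1-5) fun_eq_iff mod_simps a mm)
qed

lemma cmmid:
  assumes "m \<ge> 2" "0 \<le> v 0" "v 0 < int n" "0 \<le> v (Suc m)" "v (Suc m) < int n" "v m \<in> {0,1}"
    "1 \<le> j" "j + 2 \<le> m"
  shows "((yoke_s n m m \<circ> yoke_s n m j) ^^ 2) v = v \<and> ((yoke_s n m j \<circ> yoke_s n m m) ^^ 2) v = v"
proof -
  have a: "v (Suc m) mod int n = v (Suc m)" using assms by simp
  have mm: "m \<noteq> 0" "0 \<noteq> m" "j \<noteq> 0" "0 \<noteq> j" "Suc j \<noteq> m" "m \<noteq> Suc j" "j \<noteq> m" "m \<noteq> j"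
     "Suc j \<noteq> Suc m" "Suc m \<noteq> Suc j" "j \<noteq> Suc m" "Suc m \<noteq> j" "Suc j \<noteq> 0" using assms by auto
  have m2: "yoke_s n m j = (\<lambda>v. v(j := v (Suc j), Suc j := v j))"
    using assms by (auto simp: smid fun_eq_iff)
  show ?thesis using assms(6)
    by (auto simp: ev sm_1 sm_0 m2 assms(1-5) fun_eq_iff mod_simps a mm)
qed

lemma c0m:
  assumes "m \<ge> 2" "0 \<le> v 0" "v 0 < int n" "0 \<le> v (Suc m)" "v (Suc m) < int n" "v 1 \<in> {0,1}" "v m \<in> {0,1}"
  shows "((yoke_s n m 0 \<circ> yoke_s n m m) ^^ 2) v = v \<and> ((yoke_s n m m \<circ> yoke_s n m 0) ^^ 2) v = v"
proof -
  have a: "v (Suc m) mod int n = v (Suc m)" "v 0 mod int n = v 0" using assms by simp_all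
  have mm: "m \<noteq> 0" "m \<noteq> 1" "1 \<noteq> m" "m \<noteq> Suc 0" "0 \<noteq> m" "Suc 0 \<noteq> m" using assms by auto
  have np: "0 < int n" "0 < n" using assms by simp_all
  show ?thesis using assms(6,7)
    by (auto simp: ev sm_1 sm_0 s0_1 s0_0 assms(1-5) fun_eq_iff mod_simps a mm np pos_mod_sign pos_mod_bound)
qed


lemma rmid2:
  assumes "1 \<le> i" "i < m"
  shows "(yoke_s n m i ^^ 2) v = v"
  using assms by (simp add: ev smid fun_eq_iff)

theorem proposition3p15:
  fixes n m :: nat
  assumes "n \<ge> 1" and "m \<ge> 2"
  shows "\<forall>v \<in> yoke_vertices n m.
      (\<forall>i\<le>m. (yoke_s n m i ^^ 2) v = v)
    \<and> (\<forall>i\<le>m. \<forall>j\<le>m. (i > j + 1 \<or> j > i + 1) \<longrightarrow>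
          ((yoke_s n m i \<circ> yoke_s n m j) ^^ 2) v = v)
    \<and> (\<forall>i. 1 \<le> i \<and> i \<le> m - 2 \<longrightarrow>
          ((yoke_s n m i \<circ> yoke_s n m (i+1)) ^^ 3) v = v)
    \<and> ((yoke_s n m 0 \<circ> yoke_s n m 1) ^^ 4) v = v
    \<and> ((yoke_s n m (m-1) \<circ> yoke_s n m m) ^^ 4) v = v"
proof
  fix v assume v: "v \<in> yoke_vertices n m"
  have r: "0 \<le> v 0" "v 0 < int n" "0 \<le> v (Suc m)" "v (Suc m) < int n"
    using v by (auto simp: yoke_vertices_def)
  have bits: "\<And>k. 1 \<le> k \<Longrightarrow> k \<le> m \<Longrightarrow> v k \<in> {0,1}"
    using v unfolding yoke_vertices_def by auto
  have b1: "v 1 \<in> {0,1}" using bits assms by auto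
  have b2: "v 2 \<in> {0,1}" using bits assms by auto
  have bm: "v m \<in> {0,1}" using bits assms by auto
  have bk: "v (m-1) \<in> {0,1}" using bits assms by auto
  have P1: "\<forall>i\<le>m. (yoke_s n m i ^^ 2) v = v"
  proof (intro allI impI)
    fix i assume "i \<le> m"
    then consider "i = 0" | "i = m" | "1 \<le> i \<and> i < m" by linarith
    then show "(yoke_s n m i ^^ 2) v = v"
      by cases (use r00[OF assms(2) r b1] rmm[OF assms(2) r bm] rmid2 in auto)
  qed
  have P2: "\<forall>i\<le>m. \<forall>j\<le>m. (i > j + 1 \<or> j > i + 1) \<longrightarrow>
          ((yoke_s n m i \<circ> yoke_s n m j) ^^ 2) v = v"
  proof (intro allI impI)
    fix i j assume ij: "i \<le> m" "j \<le> m" "i > j + 1 \<or> j > i + 1"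
    consider "i = 0" | "i = m" | "1 \<le> i \<and> i < m" using ij by linarith
    then show "((yoke_s n m i \<circ> yoke_s n m j) ^^ 2) v = v"
    proof cases
      case 1
      then consider "j = m" | "2 \<le> j \<and> j < m" using ij by linarith
      then show ?thesis
        by cases (use 1 c0m[OF assms(2) r b1 bm] c0mid[OF assms(2) r b1, of j] in auto)
    next
      case 2
      then consider "j = 0" | "1 \<le> j \<and> j + 2 \<le> m" using ij assms by linarith
      then show ?thesis
        by cases (use 2 c0m[OF assms(2) r b1 bm] cmmid[OF assms(2) r bm, of j] in auto)
    next
      case 3
      note im = 3
      then consider "j = 0" | "j = m" | "1 \<le> j \<and> j < m" using ij by linarith
      then show ?thesis
      proof cases
        case 1 then show ?thesis using im ij c0mid[OF assms(2) r b1, of i] by auto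
      next
        case 2 then show ?thesis using im ij cmmid[OF assms(2) r bm, of i] by auto
      next
        case 3 then show ?thesis using im ij cmid[of i m j n v] by auto
      qed
    qed
  qed
  have P3: "\<forall>i. 1 \<le> i \<and> i \<le> m - 2 \<longrightarrow>
          ((yoke_s n m i \<circ> yoke_s n m (i+1)) ^^ 3) v = v"
    using r3 assms(2) by (metis le_diff_conv2)
  have P4: "((yoke_s n m 0 \<circ> yoke_s n m 1) ^^ 4) v = v"
    using r01[OF assms(2) r b1 b2] .
  have P5: "((yoke_s n m (m-1) \<circ> yoke_s n m m) ^^ 4) v = v"
    using rmm1[OF assms(2) r bm bk] assms(2) by simp
  show "(\<forall>i\<le>m. (yoke_s n m i ^^ 2) v = v)
    \<and> (\<forall>i\<le>m. \<forall>j\<le>m. (i > j + 1 \<or> j > i + 1) \<longrightarrow>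
          ((yoke_s n m i \<circ> yoke_s n m j) ^^ 2) v = v)
    \<and> (\<forall>i. 1 \<le> i \<and> i \<le> m - 2 \<longrightarrow>
          ((yoke_s n m i \<circ> yoke_s n m (i+1)) ^^ 3) v = v)
    \<and> ((yoke_s n m 0 \<circ> yoke_s n m 1) ^^ 4) v = v
    \<and> ((yoke_s n m (m-1) \<circ> yoke_s n m m) ^^ 4) v = v"
    using P1 P2 P3 P4 P5 by blast
qed

end
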